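(* For every $d\ge1$ and every $1\le i\le d$, $H_{i,d}>0$.
   Context: For integers $i,d\ge -1$ define $f_{-1,-1}=1$, $f_{-1,d}=0$ for $d\ge0$, $f_{i,-1}=0$ for $i\ge0$, and $f_{i,d}=(i+1)!\,S(d+1,i+1)$ for $i,d\ge0$, where $S(\cdot,\cdot)$ is the Stirling number of the second kind. For $d\ge0$ define rational numbers $F_{i,d}$, $-1\le i\le d$, by $F_{d,d}=1$ and recursively for $-1\le i\le d-1$, $F_{i,d}=\frac{1}{(d+1)!-(i+1)!}\sum_{j=i+1}^{d}f_{i,j}F_{j,d}$. Let $F_d(z)=\sum_{i=-1}^dF_{i,d}z^{d-i}$, and define the $H$-polynomial $H_d(z)=F_d(z-1)=\sum_{i=0}^{d+1}H_{i,d}z^{d+1-i}$, which defines the numbers $H_{i,d}$. *)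

theory Defs
  imports "HOL-Combinatorics.Stirling" "HOL-Computational_Algebra.Polynomial"
begin

definition fnum :: "int \<Rightarrow> int \<Rightarrow> rat" where
  "fnum i d =
     (if i = -1 \<and> d = -1 then 1
      else if i = -1 \<or> d = -1 then 0
      else of_nat (fact (nat (i + 1)) * Stirling (nat (d + 1)) (nat (i + 1))))"

function Fnum :: "int \<Rightarrow> int \<Rightarrow> rat" where
  "Fnum i d =
     (if i < -1 \<or> i > d then 0
      else if i = d then 1
      else (1 / (of_nat (fact (nat (d + 1))) - of_nat (fact (nat (i + 1)))))
             * (\<Sum>j\<in>{i+1..d}. fnum i j * Fnum j d))"
  by auto
termination
  by (relation "measure (\<lambda>(i, d). nat (d - i))") auto

definition Fpoly :: "int \<Rightarrow> rat poly" where
  "Fpoly d = (\<Sum>i\<in>{-1..d}. monom (Fnum i d) (nat (d - i)))"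

definition Hpoly :: "int \<Rightarrow> rat poly" where
  "Hpoly d = pcompose (Fpoly d) [:-1, 1:]"

definition Hnum :: "int \<Rightarrow> int \<Rightarrow> rat" where
  "Hnum i d = coeff (Hpoly d) (nat (d + 1 - i))"

end

theory Submission imports Defs "HOL-Computational_Algebra.Polynomial_FPS" begin
unbundle fps_syntax
declare Fnum.simps[simp del]

definition Fa :: "nat \<Rightarrow> nat \<Rightarrow> rat" where "Fa N a = Fnum (int a - 1) (int N)"

lemma nat_int_Suc [simp]: "nat (int x + 1) = Suc x" by simp

lemma fnum_eq: "fnum (int a - 1) (int b - 1) = of_nat (fact a * Stirling b a)"
  unfolding fnum_def by (cases a; cases b) (auto simp: nat_diff_distrib)

lemma Fa_top: "Fa N (Suc N) = 1"
  unfolding Fa_def by (subst Fnum.simps) simp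

lemma Fa_big: "Suc N < a \<Longrightarrow> Fa N a = 0"
  unfolding Fa_def by (subst Fnum.simps) simp

lemma reindex1: "(\<Sum>j\<in>{int a..int N}. f j) = (\<Sum>b\<in>{Suc a..Suc N}. f (int b - 1))"
  by (rule sum.reindex_bij_witness[of _ "\<lambda>b. int b - 1" "\<lambda>j. nat (j+1)"]) auto

lemma reindex2: "(\<Sum>i\<in>{-1..int N}. f i) = (\<Sum>a\<le>Suc N. f (int a - 1))"
  by (rule sum.reindex_bij_witness[of _ "\<lambda>a. int a - 1" "\<lambda>i. nat (i+1)"]) auto

lemma Fa_rec:
  assumes "a \<le> N"
  shows "Fa N a = 1 / (fact (Suc N) - fact a) * (\<Sum>b\<in>{Suc a..Suc N}. of_nat (fact a * Stirling b a) * Fa N b)"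
proof -
  have "Fa N a = 1 / (fact (Suc N) - fact a)
     * (\<Sum>j\<in>{int a..int N}. fnum (int a - 1) j * Fnum j (int N))"
    unfolding Fa_def using assms by (subst Fnum.simps) (simp del: Fnum.simps fact_Suc)
  also have "(\<Sum>j\<in>{int a..int N}. fnum (int a - 1) j * Fnum j (int N))
     = (\<Sum>b\<in>{Suc a..Suc N}. of_nat (fact a * Stirling b a) * Fa N b)"
    by (simp add: reindex1 fnum_eq Fa_def)
  finally show ?thesis .
qed

lemma E1:
  assumes "1 \<le> N" "a \<le> Suc N"
  shows "fact (Suc N) * Fa N a = (\<Sum>b\<in>{a..Suc N}. of_nat (fact a * Stirling b a) * Fa N b)"
proof (cases "a = Suc N")
  case True then show ?thesis by (simp add: Fa_top algebra_simps)
next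
  case False
  hence aN: "a \<le> N" using assms by simp
  have "fact a \<le> (fact N :: nat)" using aN by (rule fact_mono)
  moreover have "fact N < (fact (Suc N) :: nat)" using assms by simp
  ultimately have lt: "(fact a :: rat) < fact (Suc N)" by (metis of_nat_fact of_nat_less_iff le_less_trans)
  define S where "S = (\<Sum>b\<in>{Suc a..Suc N}. of_nat (fact a * Stirling b a) * Fa N b :: rat)"
  have "Fa N a = S / (fact (Suc N) - fact a)" using Fa_rec[OF aN] by (simp add: S_def)
  hence "(fact (Suc N) - fact a) * Fa N a = S" using lt by simp
  hence "fact (Suc N) * Fa N a = fact a * Fa N a + S" by (simp add: algebra_simps)
  also have "\<dots> = (\<Sum>b\<in>{a..Suc N}. of_nat (fact a * Stirling b a) * Fa N b)"
    unfolding S_def using assms by (subst sum.atLeast_Suc_atMost) simp_all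
  finally show ?thesis .
qed

lemma k_choose: "k * (k choose a) = a * (k choose a) + Suc a * (k choose Suc a)"
  by (metis Suc_times_binomial_eq add.assoc add_left_imp_eq
    add_mult_distrib2 binomial_Suc_Suc mult.commute mult_Suc)

lemma pow_stirling: "(k::nat) ^ b = (\<Sum>a\<le>b. fact a * Stirling b a * (k choose a))"
proof (induction b)
  case 0 then show ?case by simp
next
  case (Suc b)
  define g where "g a = fact a * a * Stirling b a * (k choose a)" for a
  define h where "h a = fact (Suc a) * Stirling b a * (k choose Suc a)" for a
  have "k ^ Suc b = (\<Sum>a\<le>b. fact a * Stirling b a * (k * (k choose a)))"
    using Suc by (simp add: sum_distrib_left algebra_simps)
  also have "\<dots> = (\<Sum>a\<le>b. g a + h a)"
    unfolding k_choose g_def h_def by (intro sum.cong) (simp_all add: algebra_simps)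
  also have "\<dots> = (\<Sum>a\<le>b. g a) + (\<Sum>a\<le>b. h a)" by (rule sum.distrib)
  also have "(\<Sum>a\<le>b. g a) = (\<Sum>a\<le>b. g (Suc a))"
  proof -
    have "(\<Sum>a\<le>Suc b. g a) = g 0 + (\<Sum>a\<le>b. g (Suc a))" by (rule sum.atMost_Suc_shift)
    moreover have "(\<Sum>a\<le>Suc b. g a) = (\<Sum>a\<le>b. g a)" by (simp add: g_def)
    moreover have "g 0 = 0" by (simp add: g_def)
    ultimately show ?thesis by simp
  qed
  also have "(\<Sum>a\<le>b. g (Suc a)) + (\<Sum>a\<le>b. h a) = (\<Sum>a\<le>b. g (Suc a) + h a)"
    by (rule sum.distrib[symmetric])
  also have "\<dots> = (\<Sum>a\<le>b. fact (Suc a) * Stirling (Suc b) (Suc a) * (k choose Suc a))"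
    by (intro sum.cong) (simp_all add: g_def h_def algebra_simps)
  also have "\<dots> = (\<Sum>a\<le>Suc b. fact a * Stirling (Suc b) a * (k choose a))"
    by (simp only: sum.atMost_Suc_shift) simp
  finally show ?case .
qed

lemma newton:
  assumes "1 \<le> N"
  shows "(\<Sum>b\<le>Suc N. Fa N b * of_nat k ^ b) = fact (Suc N) * (\<Sum>a\<le>Suc N. Fa N a * of_nat (k choose a))"
proof -
  let ?n = "Suc N"
  let ?c = "\<lambda>b a. of_nat (fact a * Stirling b a) :: rat"
  have "(\<Sum>b\<le>?n. Fa N b * of_nat k ^ b) = (\<Sum>b\<le>?n. Fa N b * (\<Sum>a\<le>b. ?c b a * of_nat (k choose a)))"
  proof (intro sum.cong refl)
    fix b
    have "(of_nat k ^ b :: rat) = of_nat (k ^ b)" by simp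
    also have "\<dots> = (\<Sum>a\<le>b. ?c b a * of_nat (k choose a))" by (subst pow_stirling) simp
    finally show "Fa N b * of_nat k ^ b = Fa N b * (\<Sum>a\<le>b. ?c b a * of_nat (k choose a))" by simp
  qed
  also have "\<dots> = (\<Sum>b\<le>?n. \<Sum>a\<le>?n. Fa N b * ?c b a * of_nat (k choose a))"
  proof (intro sum.cong refl)
    fix b assume b: "b \<in> {..?n}"
    have "(\<Sum>a\<le>b. ?c b a * of_nat (k choose a)) = (\<Sum>a\<le>?n. ?c b a * of_nat (k choose a))"
      by (rule sum.mono_neutral_left) (use b in auto)
    thus "Fa N b * (\<Sum>a\<le>b. ?c b a * of_nat (k choose a)) = (\<Sum>a\<le>?n. Fa N b * ?c b a * of_nat (k choose a))"
      by (simp only: sum_distrib_left mult.assoc)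
  qed
  also have "\<dots> = (\<Sum>a\<le>?n. of_nat (k choose a) * (\<Sum>b\<le>?n. ?c b a * Fa N b))"
    by (subst sum.swap) (simp add: sum_distrib_left algebra_simps)
  also have "\<dots> = (\<Sum>a\<le>?n. of_nat (k choose a) * (fact ?n * Fa N a))"
  proof (intro sum.cong refl)
    fix a assume a: "a \<in> {..?n}"
    have "(\<Sum>b\<le>?n. ?c b a * Fa N b) = (\<Sum>b\<in>{a..?n}. ?c b a * Fa N b)"
      by (rule sum.mono_neutral_right) auto
    also have "\<dots> = fact ?n * Fa N a" using E1[OF assms, of a] a by simp
    finally show "of_nat (k choose a) * (\<Sum>b\<le>?n. ?c b a * Fa N b) = of_nat (k choose a) * (fact ?n * Fa N a)" by simp
  qed
  finally show ?thesis by (simp add: sum_distrib_left algebra_simps)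
qed

definition Ht :: "nat \<Rightarrow> nat \<Rightarrow> rat" where
  "Ht N t = (if t \<le> Suc N then Hnum (int t) (int N) else 0)"

lemma poly_F: "poly (Fpoly (int N)) z = (\<Sum>a\<le>Suc N. Fa N a * z^(Suc N - a))"
  unfolding Fpoly_def poly_sum poly_monom reindex2 Fa_def
proof (intro sum.cong refl)
  fix x assume "x \<in> {..Suc N}"
  hence "int N - (int x - 1) = int (Suc N - x)" by auto
  thus "Fnum (int x - 1) (int N) * z ^ nat (int N - (int x - 1)) = Fnum (int x - 1) (int N) * z ^ (Suc N - x)"
    by (simp only: nat_int)
qed

lemma deg_F: "degree (Fpoly (int N)) \<le> Suc N"
  unfolding Fpoly_def
  by (rule degree_sum_le) (auto intro: order.trans[OF degree_monom_le])

lemma deg_H: "degree (Hpoly (int N)) \<le> Suc N"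
  unfolding Hpoly_def using degree_pcompose_le[of "Fpoly (int N)" "[:-1,1:]"] deg_F[of N] by simp

lemma poly_H: "poly (Hpoly (int N)) w = (\<Sum>t\<le>Suc N. Ht N t * w^(Suc N - t))"
proof -
  have "poly (Hpoly (int N)) w = poly (\<Sum>i\<le>Suc N. monom (coeff (Hpoly (int N)) i) i) w"
    by (simp only: poly_as_sum_of_monoms'[OF deg_H])
  also have "\<dots> = (\<Sum>i\<le>Suc N. coeff (Hpoly (int N)) i * w^i)"
    by (simp add: poly_sum poly_monom)
  also have "\<dots> = (\<Sum>t\<le>Suc N. coeff (Hpoly (int N)) (Suc N - t) * w^(Suc N - t))"
    by (rule sum.reindex_bij_witness[of _ "\<lambda>t. Suc N - t" "\<lambda>i. Suc N - i"]) auto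
  also have "\<dots> = (\<Sum>t\<le>Suc N. Ht N t * w^(Suc N - t))"
    by (intro sum.cong refl) (auto simp: Ht_def Hnum_def nat_diff_distrib)
  finally show ?thesis .
qed

lemma P3: "poly (Hpoly (int N)) w = poly (Fpoly (int N)) (w - 1)"
  unfolding Hpoly_def poly_pcompose by simp

lemma homog:
  fixes x y :: rat
  assumes x0: "x \<noteq> 0"
  shows "(\<Sum>t\<le>Suc N. Ht N t * x^t * y^(Suc N - t)) = (\<Sum>a\<le>Suc N. Fa N a * x^a * (y - x)^(Suc N - a))"
proof -
  let ?n = "Suc N"
  have e: "(\<Sum>t\<le>?n. Ht N t * (y/x)^(?n - t)) = (\<Sum>a\<le>?n. Fa N a * (y/x - 1)^(?n - a))"
    using P3[of N "y/x"] by (simp add: poly_H poly_F)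
  have l: "x^?n * (Ht N t * (y/x)^(?n - t)) = Ht N t * x^t * y^(?n - t)" if "t \<le> ?n" for t
  proof -
    have "x^?n = x^t * x^(?n - t)" using that by (simp add: power_add[symmetric])
    thus ?thesis using x0 by (simp add: power_divide)
  qed
  have r: "x^?n * (Fa N a * (y/x - 1)^(?n - a)) = Fa N a * x^a * (y - x)^(?n - a)" if "a \<le> ?n" for a
  proof -
    have "x^?n = x^a * x^(?n - a)" using that by (simp add: power_add[symmetric])
    moreover have "x * (y/x - 1) = y - x" using x0 by (simp add: field_simps)
    ultimately show ?thesis by (simp add: power_mult_distrib[symmetric] mult.assoc mult.left_commute)
  qed
  have "x^?n * (\<Sum>t\<le>?n. Ht N t * (y/x)^(?n - t)) = (\<Sum>t\<le>?n. Ht N t * x^t * y^(?n - t))"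
    unfolding sum_distrib_left by (rule sum.cong[OF refl]) (rule l, simp)
  moreover have "x^?n * (\<Sum>a\<le>?n. Fa N a * (y/x - 1)^(?n - a)) = (\<Sum>a\<le>?n. Fa N a * x^a * (y - x)^(?n - a))"
    unfolding sum_distrib_left by (rule sum.cong[OF refl]) (rule r, simp)
  ultimately show ?thesis using e by simp
qed

lemma poly_eq_nonzero:
  fixes p q :: "rat poly"
  assumes "\<And>z. z \<noteq> 0 \<Longrightarrow> poly p z = poly q z"
  shows "p = q"
proof (rule ccontr)
  assume "p \<noteq> q"
  hence "p - q \<noteq> 0" by simp
  hence fin: "finite {z. poly (p - q) z = 0}" by (rule poly_roots_finite)
  have "UNIV - {0} \<subseteq> {z. poly (p - q) z = 0}" using assms by auto
  hence "finite (UNIV - {0::rat})" using fin finite_subset by blast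
  thus False by (simp add: infinite_UNIV_char_0)
qed

definition PH :: "nat \<Rightarrow> rat poly" where "PH N = (\<Sum>t\<le>Suc N. monom (Ht N t) t)"
definition PF :: "nat \<Rightarrow> rat poly" where
  "PF N = (\<Sum>a\<le>Suc N. smult (Fa N a) ([:0,1:]^a * (1 - [:0,1:])^(Suc N - a)))"

lemma PH_PF: "PH N = PF N"
proof (rule poly_eq_nonzero)
  fix z :: rat assume "z \<noteq> 0"
  from homog[OF this, of N 1] show "poly (PH N) z = poly (PF N) z"
    unfolding PH_def PF_def by (simp add: poly_sum poly_monom mult_ac)
qed

lemma homog_all:
  "(\<Sum>t\<le>Suc N. Ht N t * z^t) = (\<Sum>a\<le>Suc N. Fa N a * z^a * (1 - z)^(Suc N - a))"
  using arg_cong[OF PH_PF, of "\<lambda>p. poly p z"] unfolding PH_def PF_def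
  by (simp add: poly_sum poly_monom mult_ac)

lemma Ht0: "Ht N 0 = Fa N 0"
  using homog_all[of N 0] by (simp add: zero_power sum.atMost_shift del: sum.atMost_Suc)

lemma deriv_XA: "fps_deriv (fps_X * (A::rat fps)) = Abs_fps (\<lambda>k. of_nat (k+1) * A $ k)"
  by (rule fps_ext) (simp add: algebra_simps)

lemma deriv_Ypow: "fps_deriv ((1 - fps_X)^(Suc m) :: rat fps) = - (of_nat (m+1) * (1 - fps_X)^m)"
proof -
  have "fps_deriv ((1 - fps_X)^(Suc m) :: rat fps) = of_nat (Suc m) * fps_deriv (1 - fps_X) * (1 - fps_X)^(Suc m - 1)"
    by (rule fps_deriv_power')
  also have "\<dots> = - (of_nat (m+1) * (1 - fps_X)^m)" by (simp del: power_Suc add: algebra_simps)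
  finally show ?thesis .
qed

lemma key_deriv:
  fixes A p :: "rat fps"
  assumes "A * (1 - fps_X)^(m+1) = p"
  shows "Abs_fps (\<lambda>k. of_nat (k+1) * A $ k) * (1-fps_X)^(m+2)
        = (p + fps_X * fps_deriv p) * (1 - fps_X) + of_nat (m+1) * fps_X * p"
proof -
  define Y :: "rat fps" where "Y = 1 - fps_X"
  define D where "D = fps_deriv (fps_X * A)"
  have e: "fps_deriv ((fps_X * A) * Y^(Suc m)) = fps_deriv (fps_X * p)"
    using assms by (simp add: mult.assoc Y_def)
  have l: "fps_deriv ((fps_X * A) * Y^(Suc m)) = (fps_X * A) * (- (of_nat (m+1) * Y^m)) + D * Y^(Suc m)"
    unfolding D_def Y_def by (simp only: fps_deriv_mult deriv_Ypow)
  have r: "fps_deriv (fps_X * p) = fps_X * fps_deriv p + p"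
    by (simp only: fps_deriv_mult fps_deriv_fps_X) simp
  have "D * Y^(Suc m) - of_nat (m+1) * fps_X * A * Y^m = p + fps_X * fps_deriv p"
    using e l r by (simp add: algebra_simps)
  hence "(D * Y^(Suc m) - of_nat (m+1) * fps_X * A * Y^m) * Y = (p + fps_X * fps_deriv p) * Y" by simp
  hence "D * Y^(m+2) - of_nat (m+1) * fps_X * (A * Y^(m+1)) = (p + fps_X * fps_deriv p) * Y"
    by (simp add: algebra_simps power_Suc2 del: power_Suc)
  hence "D * Y^(m+2) - of_nat (m+1) * fps_X * p = (p + fps_X * fps_deriv p) * Y"
    using assms unfolding Y_def by (simp only:)
  hence "D * Y^(m+2) = (p + fps_X * fps_deriv p) * Y + of_nat (m+1) * fps_X * p"
    by (simp only: diff_eq_eq)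
  thus ?thesis unfolding D_def Y_def deriv_XA .
qed

lemma stepA:
  fixes A :: "rat fps"
  assumes "A * (1 - fps_X)^(m+1) = Abs_fps p"
  shows "Abs_fps (\<lambda>k. of_nat (k+1) * A $ k) * (1-fps_X)^(m+2)
        = Abs_fps (\<lambda>t. of_nat (t+1) * p t + (if t = 0 then 0 else (of_nat m + 1 - of_nat t) * p (t-1)))"
  unfolding key_deriv[OF assms]
proof (rule fps_ext)
  fix t
  show "((Abs_fps p + fps_X * fps_deriv (Abs_fps p)) * (1 - fps_X) + of_nat (m + 1) * fps_X * Abs_fps p) $ t =
        Abs_fps (\<lambda>t. of_nat (t+1) * p t + (if t = 0 then 0 else (of_nat m + 1 - of_nat t) * p (t-1))) $ t"
  proof -
    have a: "(f * (1 - fps_X)) $ t = f $ t - (if t = 0 then 0 else f $ (t-1))" for f :: "rat fps"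
      by (simp add: right_diff_distrib mult.commute[of f fps_X])
    have b: "(Abs_fps p + fps_X * fps_deriv (Abs_fps p)) $ t = of_nat (t+1) * p t" for t
      by (cases t) (simp_all add: algebra_simps)
    have c: "(of_nat (m + 1) * fps_X * Abs_fps p) $ t = (if t = 0 then 0 else of_nat (m+1) * p (t-1))"
      by (simp add: mult.assoc fps_of_nat[symmetric])
    show ?thesis unfolding fps_add_nth a b c
      by (cases t) (simp_all add: algebra_simps)
  qed
qed

lemma mult_1mX_nth: "(f * (1 - fps_X)) $ t = f $ t - (if t = 0 then 0 else f $ (t-1))" for f :: "rat fps"
  by (simp add: right_diff_distrib mult.commute[of f fps_X])

lemma stepK:
  fixes A :: "rat fps"
  assumes "A * (1 - fps_X)^(m+1) = Abs_fps p"
  shows "Abs_fps (\<lambda>k. of_nat k * A $ k) * (1-fps_X)^(m+2)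
        = Abs_fps (\<lambda>t. of_nat t * p t + (if t = 0 then 0 else (of_nat m + 2 - of_nat t) * p (t-1)))"
proof -
  have e1: "Abs_fps (\<lambda>k. of_nat k * A $ k) = Abs_fps (\<lambda>k. of_nat (k+1) * A $ k) - A"
    by (rule fps_ext) (simp add: algebra_simps)
  have e2: "A * (1-fps_X)^(m+2) = Abs_fps p * (1 - fps_X)"
  proof -
    have "(1-fps_X)^(m+2) = (1-fps_X)^(m+1) * (1 - fps_X :: rat fps)" by simp
    thus ?thesis using assms by (simp only: mult.assoc[symmetric])
  qed
  have "Abs_fps (\<lambda>k. of_nat k * A $ k) * (1-fps_X)^(m+2)
     = Abs_fps (\<lambda>k. of_nat (k+1) * A $ k) * (1-fps_X)^(m+2) - A * (1-fps_X)^(m+2)"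
    unfolding e1 by (rule left_diff_distrib)
  also have "\<dots> = Abs_fps (\<lambda>t. of_nat (t+1) * p t + (if t = 0 then 0 else (of_nat m + 1 - of_nat t) * p (t-1)))
     - Abs_fps p * (1 - fps_X)" unfolding stepA[OF assms] e2 ..
  also have "\<dots> = Abs_fps (\<lambda>t. of_nat t * p t + (if t = 0 then 0 else (of_nat m + 2 - of_nat t) * p (t-1)))"
  proof (rule fps_ext)
    fix t show "(Abs_fps (\<lambda>t. of_nat (t+1) * p t + (if t = 0 then 0 else (of_nat m + 1 - of_nat t) * p (t-1)))
     - Abs_fps p * (1 - fps_X)) $ t = Abs_fps (\<lambda>t. of_nat t * p t + (if t = 0 then 0 else (of_nat m + 2 - of_nat t) * p (t-1))) $ t"
      unfolding fps_sub_nth mult_1mX_nth by (cases t) (simp_all add: algebra_simps)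
  qed
  finally show ?thesis .
qed

fun Bk :: "nat \<Rightarrow> nat \<Rightarrow> nat \<Rightarrow> rat" where
  "Bk 0 0 t = (if t = 0 then 1 else 0)"
| "Bk (Suc r) 0 t = of_nat (t+1) * Bk r 0 t + (if t = 0 then 0 else (of_nat r + 1 - of_nat t) * Bk r 0 (t-1))"
| "Bk r (Suc i) t = of_nat t * Bk r i t + (if t = 0 then 0 else (of_nat (r+i) + 2 - of_nat t) * Bk r i (t-1))"

lemma Bk_fps_0: "Abs_fps (\<lambda>k. (of_nat k + 1 :: rat) ^ r) * (1 - fps_X)^(r+1) = Abs_fps (Bk r 0)"
proof (induction r)
  case 0
  show ?case
    by (rule fps_ext) (simp add: right_diff_distrib mult.commute[of _ fps_X])
next
  case (Suc r)
  have "Abs_fps (\<lambda>k. of_nat (k+1) * Abs_fps (\<lambda>k. (of_nat k + 1 :: rat) ^ r) $ k) * (1-fps_X)^(r+2)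
        = Abs_fps (Bk (Suc r) 0)"
    unfolding stepA[OF Suc.IH] by (rule fps_ext) simp
  moreover have "Abs_fps (\<lambda>k. of_nat (k+1) * Abs_fps (\<lambda>k. (of_nat k + 1 :: rat) ^ r) $ k)
     = Abs_fps (\<lambda>k. (of_nat k + 1 :: rat) ^ Suc r)"
    by (rule fps_ext) (simp add: algebra_simps)
  moreover have "r + 2 = Suc r + 1" by simp
  ultimately show ?case by metis
qed

lemma Bk_fps: "Abs_fps (\<lambda>k. (of_nat k :: rat) ^ i * (of_nat k + 1) ^ r) * (1 - fps_X)^(r+i+1) = Abs_fps (Bk r i)"
proof (induction i)
  case 0
  then show ?case using Bk_fps_0 by simp
next
  case (Suc i)
  have IH: "Abs_fps (\<lambda>k. (of_nat k :: rat) ^ i * (of_nat k + 1) ^ r) * (1 - fps_X)^((r+i)+1) = Abs_fps (Bk r i)"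
    using Suc.IH by (simp add: add.assoc)
  have "Abs_fps (\<lambda>k. of_nat k * Abs_fps (\<lambda>k. (of_nat k :: rat) ^ i * (of_nat k + 1) ^ r) $ k) * (1-fps_X)^((r+i)+2)
        = Abs_fps (Bk r (Suc i))"
    unfolding stepK[OF IH] by (rule fps_ext) simp
  moreover have "Abs_fps (\<lambda>k. of_nat k * Abs_fps (\<lambda>k. (of_nat k :: rat) ^ i * (of_nat k + 1) ^ r) $ k)
     = Abs_fps (\<lambda>k. (of_nat k :: rat) ^ Suc i * (of_nat k + 1) ^ r)"
    by (rule fps_ext) (simp add: algebra_simps)
  moreover have "r + i + 2 = r + Suc i + 1" by simp
  ultimately show ?case by metis
qed

lemma Bk_supp: "r + i < t \<Longrightarrow> Bk r i t = 0"
proof (induction i arbitrary: t)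
  case 0
  then show ?case
  proof (induction r arbitrary: t)
    case 0 then show ?case by simp
  next
    case (Suc r) then show ?case by simp
  qed
next
  case (Suc i) then show ?case by simp
qed

lemma Bk_nonneg: "Bk r i t \<ge> 0"
proof (induction i arbitrary: t)
  case 0
  then show ?case
  proof (induction r arbitrary: t)
    case 0 then show ?case by simp
  next
    case (Suc r)
    have "(if t = 0 then 0 else (of_nat r + 1 - of_nat t) * Bk r 0 (t-1)) \<ge> (0::rat)"
    proof (cases "t \<le> r + 1")
      case True then show ?thesis using Suc by (auto intro!: mult_nonneg_nonneg)
    next
      case False then show ?thesis using Bk_supp[of r 0 "t-1"] by auto
    qed
    then show ?case using Suc by (simp del: of_nat_Suc)
  qed
next
  case (Suc i)
  have "(if t = 0 then 0 else (of_nat (r+i) + 2 - of_nat t) * Bk r i (t-1)) \<ge> (0::rat)"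
  proof (cases "t \<le> r + i + 2")
    case True then show ?thesis using Suc by (auto intro!: mult_nonneg_nonneg)
  next
    case False then show ?thesis using Bk_supp[of r i "t-1"] by auto
  qed
  then show ?case using Suc by (simp del: of_nat_Suc)
qed

lemma sum_shift_step:
  fixes p a b :: "nat \<Rightarrow> rat"
  assumes "p (Suc m) = 0"
  shows "(\<Sum>t\<le>Suc m. a t * p t + (if t = 0 then 0 else b t * p (t-1))) = (\<Sum>t\<le>m. (a t + b (Suc t)) * p t)"
proof -
  have "(\<Sum>t\<le>Suc m. a t * p t + (if t = 0 then 0 else b t * p (t-1)))
      = (\<Sum>t\<le>Suc m. a t * p t) + (\<Sum>t\<le>Suc m. (if t = 0 then 0 else b t * p (t-1)))"
    by (rule sum.distrib)
  also have "(\<Sum>t\<le>Suc m. a t * p t) = (\<Sum>t\<le>m. a t * p t)" using assms by simp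
  also have "(\<Sum>t\<le>Suc m. (if t = 0 then 0 else b t * p (t-1))) = (\<Sum>t\<le>m. b (Suc t) * p t)"
    by (subst sum.atMost_Suc_shift) simp
  finally show ?thesis by (simp add: sum.distrib algebra_simps)
qed

lemma Bk_sum: "(\<Sum>t\<le>r+i. Bk r i t) = fact (r+i)"
proof (induction i)
  case 0
  then show ?case
  proof (induction r)
    case 0 then show ?case by simp
  next
    case (Suc r)
    have "(\<Sum>t\<le>Suc r. Bk (Suc r) 0 t) = (\<Sum>t\<le>Suc r. of_nat (t+1) * Bk r 0 t + (if t = 0 then 0 else (of_nat r + 1 - of_nat t) * Bk r 0 (t-1)))"
      by simp
    also have "\<dots> = (\<Sum>t\<le>r. (of_nat (t+1) + (of_nat r + 1 - of_nat (Suc t))) * Bk r 0 t)"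
      by (rule sum_shift_step[where p = "Bk r 0" and a = "\<lambda>t. of_nat (t+1)" and b = "\<lambda>t. of_nat r + 1 - of_nat t"])
         (simp add: Bk_supp)
    also have "\<dots> = (\<Sum>t\<le>r. of_nat (Suc r) * Bk r 0 t)" by (intro sum.cong) auto
    also have "\<dots> = of_nat (Suc r) * fact r" using Suc by (simp add: sum_distrib_left[symmetric])
    finally show ?case by (simp add: algebra_simps)
  qed
next
  case (Suc i)
  have "(\<Sum>t\<le>Suc (r+i). Bk r (Suc i) t) = (\<Sum>t\<le>Suc (r+i). of_nat t * Bk r i t + (if t = 0 then 0 else (of_nat (r+i) + 2 - of_nat t) * Bk r i (t-1)))"
    by simp
  also have "\<dots> = (\<Sum>t\<le>r+i. (of_nat t + (of_nat (r+i) + 2 - of_nat (Suc t))) * Bk r i t)"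
    by (rule sum_shift_step[where p = "Bk r i" and a = "\<lambda>t. of_nat t" and b = "\<lambda>t. of_nat (r+i) + 2 - of_nat t"])
       (simp add: Bk_supp)
  also have "\<dots> = (\<Sum>t\<le>r+i. of_nat (Suc (r+i)) * Bk r i t)" by (intro sum.cong) auto
  also have "\<dots> = of_nat (Suc (r+i)) * fact (r+i)" using Suc by (simp add: sum_distrib_left[symmetric])
  finally show ?case by (simp add: algebra_simps)
qed

lemma Bk_posA: "t < r \<Longrightarrow> Bk r 0 t > 0"
proof (induction r arbitrary: t)
  case 0 then show ?case by simp
next
  case (Suc r)
  show ?case
  proof (cases "t < r")
    case True
    have "(if t = 0 then 0 else (of_nat r + 1 - of_nat t) * Bk r 0 (t-1)) \<ge> (0::rat)"
      using True Bk_nonneg by (auto intro!: mult_nonneg_nonneg)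
    moreover have "of_nat (t+1) * Bk r 0 t > 0" using Suc.IH[OF True] by simp
    ultimately show ?thesis by simp
  next
    case False
    hence t: "t = r" using Suc by simp
    show ?thesis
    proof (cases r)
      case 0 then show ?thesis using t by simp
    next
      case (Suc r')
      have "Bk r 0 (t-1) > 0" using Suc.IH[of "t-1"] t Suc by simp
      moreover have "of_nat (t+1) * Bk r 0 t \<ge> 0" using Bk_nonneg by simp
      ultimately show ?thesis using t Suc by simp
    qed
  qed
qed

lemma Bk_pos: "0 < r \<Longrightarrow> 0 < i \<Longrightarrow> 0 < t \<Longrightarrow> t < r + i \<Longrightarrow> Bk r i t > 0"
proof (induction i arbitrary: t)
  case 0 then show ?case by simp
next
  case (Suc i)
  show ?case
  proof (cases "i = 0")
    case True
    have "Bk r 0 (t-1) > 0" using Bk_posA[of "t-1" r] Suc.prems True by simp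
    moreover have "(of_nat (r+i) + 2 - of_nat t :: rat) > 0" using Suc.prems True by simp
    moreover have "of_nat t * Bk r i t \<ge> 0" using Bk_nonneg by simp
    ultimately show ?thesis using True Suc.prems by (simp add: add_nonneg_pos)
  next
    case False
    show ?thesis
    proof (cases "t < r + i")
      case True
      have "(if t = 0 then 0 else (of_nat (r+i) + 2 - of_nat t) * Bk r i (t-1)) \<ge> (0::rat)"
        using True Bk_nonneg by (auto intro!: mult_nonneg_nonneg)
      moreover have "of_nat t * Bk r i t > 0" using Suc.IH[OF Suc.prems(1) _ Suc.prems(3) True] False Suc.prems by simp
      ultimately show ?thesis by simp
    next
      case F2: False
      hence t: "t = r + i" using Suc.prems by simp
      have "Bk r i (t-1) > 0" using Suc.IH[of "t-1"] t Suc.prems False by simp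
      moreover have "of_nat t * Bk r i t \<ge> 0" using Bk_nonneg by simp
      moreover have "(of_nat (r+i) + 2 - of_nat t :: rat) = 2" using t by simp
      ultimately show ?thesis using t Suc.prems by simp
    qed
  qed
qed

lemma Bk_row0: "Bk r i 0 = (if i = 0 then 1 else 0)"
proof (induction i)
  case 0 then show ?case by (induction r) simp_all
next
  case (Suc i) then show ?case by simp
qed

lemma Bk_top: "0 < r \<Longrightarrow> Bk r i (r+i) = 0"
proof (induction i)
  case 0
  then obtain r' where "r = Suc r'" by (cases r) auto
  then show ?case using Bk_supp[of r' 0 "Suc r'"] by simp
next
  case (Suc i)
  then show ?case using Bk_supp[of r i "Suc (r+i)"] by simp
qed

lemma Bk_diag: "Bk 0 i i = 1"
proof (induction i)
  case 0 then show ?case by simp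
next
  case (Suc i) then show ?case using Bk_supp[of 0 i "Suc i"] by simp
qed


lemma Cbinom: "Abs_fps (\<lambda>k. of_nat (k choose a) :: rat) * (1 - fps_X)^(a+1) = fps_X^a"
proof (induction a)
  case 0
  show ?case by (rule fps_ext) (simp add: right_diff_distrib mult.commute[of _ fps_X])
next
  case (Suc a)
  have s: "Abs_fps (\<lambda>k. of_nat (k choose Suc a) :: rat) * (1 - fps_X) = fps_X * Abs_fps (\<lambda>k. of_nat (k choose a))"
  proof (rule fps_ext)
    fix k show "(Abs_fps (\<lambda>k. of_nat (k choose Suc a) :: rat) * (1 - fps_X)) $ k = (fps_X * Abs_fps (\<lambda>k. of_nat (k choose a))) $ k"
      unfolding mult_1mX_nth by (cases k) simp_all
  qed
  have "Abs_fps (\<lambda>k. of_nat (k choose Suc a) :: rat) * (1 - fps_X)^(Suc a + 1)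
      = (Abs_fps (\<lambda>k. of_nat (k choose Suc a) :: rat) * (1 - fps_X)) * (1 - fps_X)^(a+1)"
    by (simp only: mult.assoc power_Suc[symmetric] add_Suc)
  also have "\<dots> = fps_X * fps_X ^ a" unfolding s using Suc by (simp only: mult.assoc)
  finally show ?case by simp
qed

lemma fps_Ht: "Abs_fps (Ht N) = (\<Sum>a\<le>Suc N. fps_const (Fa N a) * fps_X^a * (1 - fps_X)^(Suc N - a))"
proof -
  have "Abs_fps (Ht N) = fps_of_poly (PH N)"
  proof (rule fps_ext)
    fix k show "Abs_fps (Ht N) $ k = fps_of_poly (PH N) $ k"
      by (auto simp add: PH_def coeff_sum Ht_def)
  qed
  also have "\<dots> = fps_of_poly (PF N)" by (simp add: PH_PF)
  also have "\<dots> = (\<Sum>a\<le>Suc N. fps_const (Fa N a) * fps_X^a * (1 - fps_X)^(Suc N - a))"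
    unfolding PF_def by (simp only: fps_of_poly_sum fps_of_poly_smult fps_of_poly_mult fps_of_poly_power fps_of_poly_diff fps_of_poly_fps_X fps_of_poly_1 mult.assoc)
  finally show ?thesis .
qed

lemma G_H: "(\<Sum>b\<le>Suc N. Fa N b * of_nat k ^ b) = (\<Sum>j\<le>Suc N. Ht N j * of_nat k ^ j * (of_nat k + 1)^(Suc N - j))"
proof (cases "k = 0")
  case True
  then show ?thesis using Ht0[of N] by (simp add: zero_power sum.atMost_shift del: sum.atMost_Suc)
next
  case False
  hence "(of_nat k :: rat) \<noteq> 0" by simp
  from homog[OF this, of N "of_nat k + 1"] show ?thesis by simp
qed

lemma eigen:
  assumes "1 \<le> N"
  shows "fact (Suc N) * Ht N t = (\<Sum>j\<le>Suc N. Ht N j * Bk (Suc N - j) j t)"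
proof -
  let ?n = "Suc N"
  define G where "G k = (\<Sum>b\<le>?n. Fa N b * of_nat k ^ b)" for k
  have A1: "Abs_fps G = (\<Sum>a\<le>?n. fps_const (fact ?n * Fa N a) * Abs_fps (\<lambda>k. of_nat (k choose a)))"
  proof (rule fps_ext)
    fix k
    have "Abs_fps G $ k = fact ?n * (\<Sum>a\<le>?n. Fa N a * of_nat (k choose a))"
      using newton[OF assms, of k] by (simp add: G_def)
    also have "\<dots> = (\<Sum>a\<le>?n. fact ?n * Fa N a * of_nat (k choose a))"
      by (simp only: sum_distrib_left mult.assoc)
    finally show "Abs_fps G $ k = (\<Sum>a\<le>?n. fps_const (fact ?n * Fa N a) * Abs_fps (\<lambda>k. of_nat (k choose a))) $ k"
      by (simp add: fps_sum_nth)
  qed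
  have A2: "Abs_fps G * (1 - fps_X)^(?n+1) = fps_const (fact ?n) * Abs_fps (Ht N)"
  proof -
    have "Abs_fps G * (1 - fps_X)^(?n+1)
        = (\<Sum>a\<le>?n. fps_const (fact ?n * Fa N a) * Abs_fps (\<lambda>k. of_nat (k choose a)) * (1 - fps_X)^(?n+1))"
      unfolding A1 by (rule sum_distrib_right)
    also have "\<dots> = (\<Sum>a\<le>?n. fps_const (fact ?n) * (fps_const (Fa N a) * fps_X^a * (1 - fps_X)^(?n - a)))"
    proof (rule sum.cong[OF refl])
      fix a assume "a \<in> {..?n}"
      hence "(1 - fps_X :: rat fps)^(?n+1) = (1 - fps_X)^(a+1) * (1 - fps_X)^(?n - a)"
        by (simp add: power_add[symmetric])
      hence "fps_const (fact ?n * Fa N a) * Abs_fps (\<lambda>k. of_nat (k choose a)) * (1 - fps_X)^(?n+1)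
          = fps_const (fact ?n * Fa N a) * (Abs_fps (\<lambda>k. of_nat (k choose a)) * (1 - fps_X)^(a+1)) * (1 - fps_X)^(?n - a)"
        by (simp only: mult.assoc)
      also have "\<dots> = fps_const (fact ?n) * (fps_const (Fa N a) * fps_X^a * (1 - fps_X)^(?n - a))"
        unfolding Cbinom by (simp add: mult_ac)
      finally show "fps_const (fact ?n * Fa N a) * Abs_fps (\<lambda>k. of_nat (k choose a)) * (1 - fps_X)^(?n+1)
          = fps_const (fact ?n) * (fps_const (Fa N a) * fps_X^a * (1 - fps_X)^(?n - a))" .
    qed
    also have "\<dots> = fps_const (fact ?n) * Abs_fps (Ht N)"
      unfolding fps_Ht by (simp only: sum_distrib_left)
    finally show ?thesis .
  qed
  have B1: "Abs_fps G = (\<Sum>j\<le>?n. fps_const (Ht N j) * Abs_fps (\<lambda>k. (of_nat k :: rat) ^ j * (of_nat k + 1) ^ (?n - j)))"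
  proof (rule fps_ext)
    fix k
    have "Abs_fps G $ k = (\<Sum>j\<le>?n. Ht N j * (of_nat k ^ j * (of_nat k + 1) ^ (?n - j)))"
      using G_H[of N k] by (simp only: G_def fps_nth_Abs_fps mult.assoc)
    thus "Abs_fps G $ k = (\<Sum>j\<le>?n. fps_const (Ht N j) * Abs_fps (\<lambda>k. (of_nat k :: rat) ^ j * (of_nat k + 1) ^ (?n - j))) $ k"
      by (simp only: fps_sum_nth fps_mult_left_const_nth fps_nth_Abs_fps)
  qed
  have B2: "Abs_fps G * (1 - fps_X)^(?n+1) = (\<Sum>j\<le>?n. fps_const (Ht N j) * Abs_fps (Bk (?n - j) j))"
    unfolding B1 sum_distrib_right
  proof (rule sum.cong[OF refl])
    fix j assume "j \<in> {..?n}"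
    hence e: "?n + 1 = (?n - j) + j + 1" by simp
    show "fps_const (Ht N j) * Abs_fps (\<lambda>k. (of_nat k :: rat) ^ j * (of_nat k + 1) ^ (?n - j)) * (1 - fps_X)^(?n+1)
        = fps_const (Ht N j) * Abs_fps (Bk (?n - j) j)"
      unfolding e mult.assoc Bk_fps ..
  qed
  have "(fps_const (fact ?n) * Abs_fps (Ht N)) $ t = (\<Sum>j\<le>?n. fps_const (Ht N j) * Abs_fps (Bk (?n - j) j)) $ t"
    using A2 B2 by simp
  thus ?thesis by (simp add: fps_sum_nth)
qed

lemma perron:
  fixes h :: "nat \<Rightarrow> rat" and B :: "nat \<Rightarrow> nat \<Rightarrow> rat" and L :: rat
  assumes fin: "finite I"
    and eig: "\<And>t. t \<in> I \<Longrightarrow> L * h t = (\<Sum>j\<in>I. B t j * h j)"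
    and pos: "\<And>t j. t \<in> I \<Longrightarrow> j \<in> I \<Longrightarrow> B t j > 0"
    and col: "\<And>j. j \<in> I \<Longrightarrow> (\<Sum>t\<in>I. B t j) \<le> L"
    and sm: "(\<Sum>t\<in>I. h t) > 0"
    and t: "t \<in> I"
  shows "h t > 0"
proof -
  define P where "P t = max (h t) 0" for t
  have P0: "P t \<ge> 0" for t by (simp add: P_def)
  have hP: "h t \<le> P t" for t by (simp add: P_def)
  have ineq: "L * P t \<le> (\<Sum>j\<in>I. B t j * P j)" if "t \<in> I" for t
  proof (cases "h t > 0")
    case True
    hence "L * P t = (\<Sum>j\<in>I. B t j * h j)" using eig[OF that] by (simp add: P_def)
    also have "\<dots> \<le> (\<Sum>j\<in>I. B t j * P j)"
    proof (rule sum_mono)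
      fix j assume "j \<in> I"
      show "B t j * h j \<le> B t j * P j" by (rule mult_left_mono[OF hP]) (use pos[OF that \<open>j \<in> I\<close>] in simp)
    qed
    finally show ?thesis .
  next
    case False
    hence "L * P t = 0" by (simp add: P_def)
    also have "0 \<le> (\<Sum>j\<in>I. B t j * P j)"
    proof (rule sum_nonneg)
      fix j assume "j \<in> I"
      show "0 \<le> B t j * P j" by (rule mult_nonneg_nonneg[OF _ P0]) (use pos[OF that \<open>j \<in> I\<close>] in simp)
    qed
    finally show ?thesis .
  qed
  have "(\<Sum>t\<in>I. \<Sum>j\<in>I. B t j * P j) = (\<Sum>j\<in>I. (\<Sum>t\<in>I. B t j) * P j)"
    by (subst sum.swap) (simp add: sum_distrib_right)
  also have "\<dots> \<le> (\<Sum>j\<in>I. L * P j)"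
  proof (rule sum_mono)
    fix j assume "j \<in> I"
    show "(\<Sum>t\<in>I. B t j) * P j \<le> L * P j" by (rule mult_right_mono[OF col[OF \<open>j \<in> I\<close>] P0])
  qed
  finally have tot: "(\<Sum>t\<in>I. (\<Sum>j\<in>I. B t j * P j) - L * P t) \<le> 0"
    by (simp add: sum_subtractf sum_distrib_left)
  have nn: "\<forall>t\<in>I. (\<Sum>j\<in>I. B t j * P j) - L * P t \<ge> 0" using ineq by simp
  have s0: "(\<Sum>t\<in>I. (\<Sum>j\<in>I. B t j * P j) - L * P t) = 0"
  proof -
    have "0 \<le> (\<Sum>t\<in>I. (\<Sum>j\<in>I. B t j * P j) - L * P t)" by (rule sum_nonneg) (use nn in auto)
    thus ?thesis using tot by linarith
  qed
  have eq: "\<forall>t\<in>I. (\<Sum>j\<in>I. B t j * P j) - L * P t = 0"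
  proof
    fix t assume "t \<in> I"
    from sum_nonneg_eq_0_iff[OF fin, of "\<lambda>t. (\<Sum>j\<in>I. B t j * P j) - L * P t"] nn s0
    have "\<forall>t\<in>I. (\<Sum>j\<in>I. B t j * P j) - L * P t = 0" by simp
    thus "(\<Sum>j\<in>I. B t j * P j) - L * P t = 0" using \<open>t \<in> I\<close> by blast
  qed
  have "(\<Sum>t\<in>I. h t) \<le> (\<Sum>t\<in>I. P t)" by (rule sum_mono) (rule hP)
  hence "(\<Sum>t\<in>I. P t) > 0" using sm by linarith
  have "\<exists>j\<in>I. P j > 0"
  proof (rule ccontr)
    assume "\<not> (\<exists>j\<in>I. P j > 0)"
    hence "\<And>j. j \<in> I \<Longrightarrow> P j \<le> 0" by (simp add: not_less)
    hence "(\<Sum>t\<in>I. P t) \<le> (\<Sum>t\<in>I. 0)" by (intro sum_mono) auto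
    thus False using \<open>(\<Sum>t\<in>I. P t) > 0\<close> by simp
  qed
  then obtain j where j: "j \<in> I" "P j > 0" by blast
  have "B t j * P j > 0" using pos[OF t j(1)] j(2) by simp
  also have "B t j * P j \<le> (\<Sum>j\<in>I. B t j * P j)"
  proof (rule member_le_sum[OF j(1) _ fin])
    fix x assume "x \<in> I - {j}"
    show "0 \<le> B t x * P x" by (rule mult_nonneg_nonneg[OF _ P0]) (use pos[OF t, of x] \<open>x \<in> I - {j}\<close> in simp)
  qed
  also have "\<dots> = L * P t" using eq t by simp
  finally have "L * P t > 0" .
  moreover have "L > 0"
  proof -
    have "0 < B t j" using pos[OF t j(1)] .
    also have "B t j \<le> (\<Sum>t\<in>I. B t j)"
    proof (rule member_le_sum[OF t _ fin])
      fix x assume "x \<in> I - {t}"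
      show "0 \<le> B x j" using pos[of x j] j(1) \<open>x \<in> I - {t}\<close> by simp
    qed
    also have "\<dots> \<le> L" using col[OF j(1)] .
    finally show ?thesis .
  qed
  ultimately have "P t > 0" by (simp add: zero_less_mult_iff)
  thus ?thesis by (simp add: P_def)
qed

lemma fact_ge2: "1 \<le> N \<Longrightarrow> (fact (Suc N) :: rat) > 1"
proof -
  assume "1 \<le> N"
  hence "(fact 1 :: nat) < fact (Suc N)" by (intro fact_less_mono) auto
  hence "(1 :: nat) < fact (Suc N)" by simp
  thus ?thesis by (metis of_nat_fact of_nat_1 of_nat_less_iff)
qed

lemma H0: assumes "1 \<le> N" shows "Ht N 0 = 0"
proof -
  have "fact (Suc N) * Ht N 0 = (\<Sum>j\<le>Suc N. Ht N j * Bk (Suc N - j) j 0)" by (rule eigen[OF assms])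
  also have "\<dots> = (\<Sum>j\<le>Suc N. if j = 0 then Ht N j else 0)" by (intro sum.cong refl) (simp add: Bk_row0)
  also have "\<dots> = Ht N 0" by (simp add: sum.delta)
  finally have "(fact (Suc N) - 1) * Ht N 0 = 0" by (simp add: algebra_simps)
  thus ?thesis using fact_ge2[OF assms] by simp
qed

lemma Hn: assumes "1 \<le> N" shows "Ht N (Suc N) = 0"
proof -
  have "fact (Suc N) * Ht N (Suc N) = (\<Sum>j\<le>Suc N. Ht N j * Bk (Suc N - j) j (Suc N))" by (rule eigen[OF assms])
  also have "\<dots> = (\<Sum>j\<le>Suc N. if j = Suc N then Ht N j else 0)"
  proof (intro sum.cong refl)
    fix j assume j: "j \<in> {..Suc N}"
    show "Ht N j * Bk (Suc N - j) j (Suc N) = (if j = Suc N then Ht N j else 0)"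
    proof (cases "j = Suc N")
      case True then show ?thesis using Bk_diag[of "Suc N"] by simp
    next
      case False
      hence "0 < Suc N - j" using j by simp
      from Bk_top[OF this, of j] False j show ?thesis by simp
    qed
  qed
  also have "\<dots> = Ht N (Suc N)" by (simp add: sum.delta)
  finally have "(fact (Suc N) - 1) * Ht N (Suc N) = 0" by (simp add: algebra_simps)
  thus ?thesis using fact_ge2[OF assms] by simp
qed

lemma Hsum: "(\<Sum>t\<le>Suc N. Ht N t) = 1"
proof -
  have "(\<Sum>t\<le>Suc N. Ht N t) = (\<Sum>a\<le>Suc N. Fa N a * 1^a * (1 - 1)^(Suc N - a))"
    using homog_all[of N 1] by simp
  also have "\<dots> = (\<Sum>a\<le>Suc N. if a = Suc N then Fa N a else 0)"
    by (intro sum.cong refl) auto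
  also have "\<dots> = 1" by (simp add: sum.delta Fa_top)
  finally show ?thesis .
qed

lemma main:
  assumes N: "1 \<le> N" and t: "1 \<le> t" "t \<le> N"
  shows "Ht N t > 0"
proof (rule perron[where I = "{1..N}" and B = "\<lambda>t j. Bk (Suc N - j) j t" and L = "fact (Suc N)"])
  have out: "Ht N j = 0" if "j \<in> {..Suc N} - {1..N}" for j
  proof -
    from that have "j = 0 \<or> j = Suc N" by auto
    thus ?thesis using H0[OF N] Hn[OF N] by auto
  qed
  show "finite {1..N}" by simp
  show "fact (Suc N) * Ht N t = (\<Sum>j\<in>{1..N}. Bk (Suc N - j) j t * Ht N j)" if "t \<in> {1..N}" for t
  proof -
    have "fact (Suc N) * Ht N t = (\<Sum>j\<le>Suc N. Ht N j * Bk (Suc N - j) j t)" by (rule eigen[OF N])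
    also have "\<dots> = (\<Sum>j\<in>{1..N}. Ht N j * Bk (Suc N - j) j t)"
      by (rule sum.mono_neutral_right) (use out in auto)
    finally show ?thesis by (simp add: mult.commute)
  qed
  show "Bk (Suc N - j) j t > 0" if "t \<in> {1..N}" "j \<in> {1..N}" for t j
    using that by (intro Bk_pos) auto
  show "(\<Sum>t\<in>{1..N}. Bk (Suc N - j) j t) \<le> fact (Suc N)" if "j \<in> {1..N}" for j
  proof -
    have "(\<Sum>t\<in>{1..N}. Bk (Suc N - j) j t) \<le> (\<Sum>t\<le>(Suc N - j) + j. Bk (Suc N - j) j t)"
      by (rule sum_mono2) (use that Bk_nonneg in auto)
    also have "\<dots> = fact (Suc N)" using Bk_sum[of "Suc N - j" j] that by simp
    finally show ?thesis .
  qed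
  have "(\<Sum>t\<in>{1..N}. Ht N t) = (\<Sum>t\<le>Suc N. Ht N t)"
    by (rule sum.mono_neutral_left) (use out in auto)
  thus "(\<Sum>t\<in>{1..N}. Ht N t) > 0" using Hsum[of N] by simp
  show "t \<in> {1..N}" using t by simp
qed

theorem lemma2p12:
  fixes d i :: int
  assumes "d \<ge> 1" and "1 \<le> i" and "i \<le> d"
  shows "Hnum i d > 0"
proof -
  define N where "N = nat d"
  define t where "t = nat i"
  have dN: "d = int N" and it: "i = int t" using assms by (simp_all add: N_def t_def)
  have "1 \<le> N" "1 \<le> t" "t \<le> N" using assms by (simp_all add: N_def t_def)
  hence "Ht N t > 0" by (intro main)
  thus ?thesis using \<open>t \<le> N\<close> by (simp add: Ht_def dN it)
qed

end
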